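(* For $i\ge 1$, let $\sigma_i$ be any permutation of the set of $2^i$ consecutive even numbers $$E_i=\{(4^i+2)/3,\ (4^i+8)/3,\ \ldots,\ (4^{i+1}-4)/3\}$$ that contains no 3-term arithmetic progression as a subsequence. Let $\pi_i$ be any permutation of the set of $2^{i-1}$ consecutive odd numbers $$O_i=\{(4^i+2)/6,\ (4^i+14)/6,\ \ldots,\ (4^{i+1}-6)/6\}$$ that contains no 3-term arithmetic progression as a subsequence. Then: (a) the concatenation $\sigma_1\pi_1\sigma_2\pi_2\sigma_3\pi_3\cdots$ is a permutation of the positive integers; (b) whenever an odd number $x$ occurs in this sequence before an even number $y$, we have $2x-y<0$; (c) the sequence contains no 4-term arithmetic progression with odd common difference as a subsequence.
   Context: A finite or infinite sequence contains a $k$-term arithmetic progression with common difference $d\neq0$ as a subsequence if there are positions $i_1<\cdots<i_k$ whose entries satisfy $a_{i_{m+1}}-a_{i_m}=d$ for all $1\le m<k$. The difference $d$ may be positive or negative. Permutations of finite sets of integers avoiding 3-term arithmetic progressions exist for every finite set of consecutive even numbers and every finite set of consecutive odd numbers. *)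

theory Defs
  imports Main
begin

definition list_has_AP :: "nat \<Rightarrow> int \<Rightarrow> int list \<Rightarrow> bool" where
  "list_has_AP k d xs \<longleftrightarrow>
     (\<exists>p :: nat \<Rightarrow> nat. (\<forall>m. Suc m < k \<longrightarrow> p m < p (Suc m))
        \<and> (\<forall>m < k. p m < length xs)
        \<and> (\<forall>m. Suc m < k \<longrightarrow> xs ! p (Suc m) - xs ! p m = d))"

definition seq_has_AP :: "nat \<Rightarrow> int \<Rightarrow> (nat \<Rightarrow> int) \<Rightarrow> bool" where
  "seq_has_AP k d a \<longleftrightarrow>
     (\<exists>p :: nat \<Rightarrow> nat. (\<forall>m. Suc m < k \<longrightarrow> p m < p (Suc m))
        \<and> (\<forall>m. Suc m < k \<longrightarrow> a (p (Suc m)) - a (p m) = d))"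

definition block_start :: "(nat \<Rightarrow> 'a list) \<Rightarrow> nat \<Rightarrow> nat" where
  "block_start B k = (\<Sum>j<k. length (B j))"

definition inf_concat :: "(nat \<Rightarrow> 'a list) \<Rightarrow> nat \<Rightarrow> 'a" where
  "inf_concat B n = (let k = (LEAST k. n < block_start B (Suc k)) in B k ! (n - block_start B k))"

definition Eset :: "nat \<Rightarrow> int set" where
  "Eset i = {x. even x \<and> 4^i + 2 \<le> 3 * x \<and> 3 * x \<le> 4^(i+1) - 4}"

definition Oset :: "nat \<Rightarrow> int set" where
  "Oset i = {x. odd x \<and> 4^i + 2 \<le> 6 * x \<and> 6 * x \<le> 4^(i+1) - 6}"

end

theory Submission
  imports Defs
begin

lemma bs_Suc: "block_start B (Suc k) = block_start B k + length (B k)"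
  by (simp add: block_start_def)

lemma bs_0: "block_start B 0 = 0" by (simp add: block_start_def)

lemma bs_mono: "i \<le> j \<Longrightarrow> block_start B i \<le> block_start B j"
  unfolding block_start_def by (rule sum_mono2) auto

lemma bs_ge:
  assumes pos: "\<And>k. length (B k) > 0"
  shows "k \<le> block_start B k"
proof (induction k)
  case 0 then show ?case by simp
next
  case (Suc k)
  have "length (B k) \<ge> 1" using pos[of k] by linarith
  then show ?case using Suc.IH by (simp add: bs_Suc)
qed

definition blk :: "(nat \<Rightarrow> 'a list) \<Rightarrow> nat \<Rightarrow> nat" where
  "blk B n = (LEAST k. n < block_start B (Suc k))"

lemma blk_props:
  assumes pos: "\<And>k. length (B k) > 0"
  shows "block_start B (blk B n) \<le> n \<and> n < block_start B (Suc (blk B n))"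
proof -
  have ex: "n < block_start B (Suc n)" using bs_ge[of B "Suc n", OF pos] by simp
  have 1: "n < block_start B (Suc (blk B n))" unfolding blk_def by (rule LeastI[of _ n]) (rule ex)
  have 2: "block_start B (blk B n) \<le> n"
  proof (cases "blk B n")
    case 0 thus ?thesis by (simp add: bs_0)
  next
    case (Suc j)
    hence "j < blk B n" by simp
    hence "\<not> n < block_start B (Suc j)" unfolding blk_def by (rule not_less_Least)
    thus ?thesis using Suc by simp
  qed
  from 1 2 show ?thesis by simp
qed

lemma blk_unique:
  assumes pos: "\<And>k. length (B k) > 0"
    and h: "block_start B k \<le> n" "n < block_start B (Suc k)"
  shows "blk B n = k"
proof (rule ccontr)
  assume "blk B n \<noteq> k"
  then consider "blk B n < k" | "k < blk B n" by linarith
  thus False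
  proof cases
    case 1 then have "block_start B (Suc (blk B n)) \<le> block_start B k" by (intro bs_mono) simp
    with blk_props[where B=B and n=n, OF pos] h show False by simp
  next
    case 2 then have "block_start B (Suc k) \<le> block_start B (blk B n)" by (intro bs_mono) simp
    with blk_props[where B=B and n=n, OF pos] h show False by simp
  qed
qed

lemma ic_eq: "inf_concat B n = B (blk B n) ! (n - block_start B (blk B n))"
  by (simp add: inf_concat_def blk_def Let_def)

lemma ic_at:
  assumes pos: "\<And>k. length (B k) > 0" and j: "j < length (B k)"
  shows "inf_concat B (block_start B k + j) = B k ! j"
proof -
  have "blk B (block_start B k + j) = k"
    by (rule blk_unique[where B=B, OF pos]) (use j in \<open>auto simp: bs_Suc\<close>)
  thus ?thesis by (simp add: ic_eq)
qed

lemma ic_idx: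
  assumes pos: "\<And>k. length (B k) > 0"
  shows "n - block_start B (blk B n) < length (B (blk B n))"
  using blk_props[where B=B and n=n, OF pos] unfolding bs_Suc by arith

lemma ic_in:
  assumes pos: "\<And>k. length (B k) > 0"
  shows "inf_concat B n \<in> set (B (blk B n))"
  unfolding ic_eq by (rule nth_mem) (rule ic_idx[where B=B, OF pos])

lemma blk_mono:
  assumes pos: "\<And>k. length (B k) > 0" and mn: "m \<le> n"
  shows "blk B m \<le> blk B n"
proof (rule ccontr)
  assume "\<not> ?thesis"
  hence "Suc (blk B n) \<le> blk B m" by simp
  hence "block_start B (Suc (blk B n)) \<le> block_start B (blk B m)" by (rule bs_mono)
  with blk_props[where B=B and n=n, OF pos] blk_props[where B=B and n=m, OF pos] mn show False by simp
qed

lemma pow4: "\<exists>q. (4::int)^(Suc k) = 12*q + 4"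
proof (induction k)
  case 0 show ?case by (rule exI[of _ 0]) simp
next
  case (Suc k) then obtain q where "(4::int)^(Suc k) = 12*q+4" by blast
  hence "(4::int)^(Suc (Suc k)) = 12*(4*q+1) + 4" by (simp add: algebra_simps)
  thus ?case by blast
qed

lemma pow_ge: "int n + 1 \<le> (4::int)^n"
proof (induction n)
  case 0 then show ?case by simp
next
  case (Suc n) then show ?case by simp
qed

lemma E_disj: "i < j \<Longrightarrow> x \<in> Eset i \<Longrightarrow> x \<in> Eset j \<Longrightarrow> False"
proof -
  assume "i < j" "x \<in> Eset i" "x \<in> Eset j"
  moreover have "(4::int)^(i+1) \<le> 4^j" using \<open>i<j\<close> by (intro power_increasing) auto
  ultimately show False unfolding Eset_def by auto
qed

lemma O_disj: "i < j \<Longrightarrow> x \<in> Oset i \<Longrightarrow> x \<in> Oset j \<Longrightarrow> False"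
proof -
  assume "i < j" "x \<in> Oset i" "x \<in> Oset j"
  moreover have "(4::int)^(i+1) \<le> 4^j" using \<open>i<j\<close> by (intro power_increasing) auto
  ultimately show False unfolding Oset_def by auto
qed

lemma E_cover: "even x \<Longrightarrow> 0 < x \<Longrightarrow> 3*x \<le> 4^(Suc n) - 4 \<Longrightarrow> \<exists>i. 1 \<le> i \<and> x \<in> Eset i"
proof (induction n)
  case 0 then show ?case by simp
next
  case (Suc n)
  show ?case
  proof (cases "3*x \<le> 4^(Suc n) - 4")
    case True then show ?thesis using Suc.IH Suc.prems(1,2) by blast
  next
    case False
    obtain q where q: "(4::int)^(Suc n) = 12*q+4" using pow4[of n] by (elim exE)
    obtain y where y: "x = 2*y" using Suc.prems(1) by (rule evenE)
    have "y \<ge> 2*q+1" using False q y by linarith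
    hence l: "4^(Suc n) + 2 \<le> 3*x" using q y by linarith
    have u: "3*x \<le> 4^(Suc n + 1) - 4" using Suc.prems(3) by (simp only: Suc_eq_plus1)
    have "x \<in> Eset (Suc n)" unfolding Eset_def mem_Collect_eq using l u Suc.prems(1) by (intro conjI)
    moreover have "(1::nat) \<le> Suc n" by simp
    ultimately show ?thesis by (intro exI[of _ "Suc n"] conjI)
  qed
qed

lemma O_cover: "odd x \<Longrightarrow> 0 < x \<Longrightarrow> 6*x \<le> 4^(Suc n) - 6 \<Longrightarrow> \<exists>i. 1 \<le> i \<and> x \<in> Oset i"
proof (induction n)
  case 0 then show ?case by simp
next
  case (Suc n)
  show ?case
  proof (cases "6*x \<le> 4^(Suc n) - 6")
    case True then show ?thesis using Suc.IH Suc.prems(1,2) by blast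
  next
    case False
    obtain q where q: "(4::int)^(Suc n) = 12*q+4" using pow4[of n] by (elim exE)
    obtain y where y: "x = 2*y+1" using Suc.prems(1) by (rule oddE)
    have "y \<ge> q" using False q y by linarith
    hence l: "4^(Suc n) + 2 \<le> 6*x" using q y by linarith
    have u: "6*x \<le> 4^(Suc n + 1) - 6" using Suc.prems(3) by (simp only: Suc_eq_plus1)
    have "x \<in> Oset (Suc n)" unfolding Oset_def mem_Collect_eq using l u Suc.prems(1) by (intro conjI)
    moreover have "(1::nat) \<le> Suc n" by simp
    ultimately show ?thesis by (intro exI[of _ "Suc n"] conjI)
  qed
qed

definition Sset :: "nat \<Rightarrow> int set" where
  "Sset k = (if even k then Eset (k div 2 + 1) else Oset (k div 2 + 1))"

lemma S_cover:
  assumes x: "(0::int) < x" shows "\<exists>k. x \<in> Sset k"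
proof -
  define n where "n = nat (6*x) + 6"
  have "int n + 1 + 1 \<le> (4::int)^(Suc n)" using pow_ge[of "Suc n"] by simp
  moreover have "int n = 6*x + 6" using x unfolding n_def by simp
  ultimately have big: "6*x + 8 \<le> (4::int)^(Suc n)" by linarith
  show ?thesis
  proof (cases "even x")
    case True
    have c1: "3*x \<le> 4^(Suc n) - 4" using big x by linarith
    obtain i where i: "1 \<le> i" "x \<in> Eset i" using E_cover[OF True x c1] by (elim exE conjE)
    have "even (2*(i-1))" "2*(i-1) div 2 + 1 = i" using i(1) by auto
    hence "x \<in> Sset (2*(i-1))" using i(2) unfolding Sset_def by simp
    thus ?thesis by (rule exI)
  next
    case False
    have c1: "6*x \<le> 4^(Suc n) - 6" using big x by linarith
    obtain i where i: "1 \<le> i" "x \<in> Oset i" using O_cover[OF False x c1] by (elim exE conjE)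
    have "odd (2*(i-1)+1)" "(2*(i-1)+1) div 2 + 1 = i" using i(1) by auto
    hence "x \<in> Sset (2*(i-1)+1)" using i(2) unfolding Sset_def by simp
    thus ?thesis by (rule exI)
  qed
qed

lemma S_pos: "x \<in> Sset k \<Longrightarrow> 0 < x"
proof -
  assume "x \<in> Sset k"
  moreover have "(0::int) < 4^(k div 2 + 1)" by simp
  ultimately show ?thesis unfolding Sset_def Eset_def Oset_def by (auto split: if_splits)
qed

lemma S_par: "x \<in> Sset k \<Longrightarrow> even x \<longleftrightarrow> even k"
  unfolding Sset_def Eset_def Oset_def by (auto split: if_splits)

lemma S_disj:
  assumes "x \<in> Sset k" "x \<in> Sset k'" shows "k = k'"
proof (rule ccontr)
  assume ne: "k \<noteq> k'"
  have par: "even k \<longleftrightarrow> even k'" using S_par[OF assms(1)] S_par[OF assms(2)] by simp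
  have ne2: "k div 2 \<noteq> k' div 2" using ne par by (metis dvd_mult_div_cancel odd_two_times_div_two_succ)
  show False
  proof (cases "even k")
    case True
    hence A: "x \<in> Eset (k div 2 + 1)" "x \<in> Eset (k' div 2 + 1)" using assms par unfolding Sset_def by auto
    consider "k div 2 + 1 < k' div 2 + 1" | "k' div 2 + 1 < k div 2 + 1" using ne2 by linarith
    thus False by cases (use A E_disj in blast)+
  next
    case False
    hence A: "x \<in> Oset (k div 2 + 1)" "x \<in> Oset (k' div 2 + 1)" using assms par unfolding Sset_def by auto
    consider "k div 2 + 1 < k' div 2 + 1" | "k' div 2 + 1 < k div 2 + 1" using ne2 by linarith
    thus False by cases (use A O_disj in blast)+
  qed
qed

lemma S_order:
  assumes x: "x \<in> Sset k" and y: "y \<in> Sset k'" and ox: "odd x" and ey: "even y" and kk: "k \<le> k'"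
  shows "2*x - y < 0"
proof -
  have ok: "odd k" using S_par[OF x] ox by simp
  have ek: "even k'" using S_par[OF y] ey by simp
  have "k < k'" using ok ek kk by (metis le_neq_implies_less)
  hence le: "k div 2 + 1 + 1 \<le> k' div 2 + 1" using ok ek by presburger
  have "(4::int)^(k div 2 + 1 + 1) \<le> 4^(k' div 2 + 1)" by (rule power_increasing[OF le]) simp
  moreover have "6*x \<le> 4^(k div 2 + 1 + 1) - 6" using x ok unfolding Sset_def Oset_def by simp
  moreover have "4^(k' div 2 + 1) + 2 \<le> 3*y" using y ek unfolding Sset_def Eset_def by simp
  ultimately show ?thesis by linarith
qed

theorem mainTheorem6:
  fixes \<sigma> \<pi> :: "nat \<Rightarrow> int list"
  assumes sigma: "\<And>i. i \<ge> 1 \<Longrightarrow> distinct (\<sigma> i) \<and> set (\<sigma> i) = Eset i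
                         \<and> \<not> (\<exists>d. d \<noteq> 0 \<and> list_has_AP 3 d (\<sigma> i))"
      and pi: "\<And>i. i \<ge> 1 \<Longrightarrow> distinct (\<pi> i) \<and> set (\<pi> i) = Oset i
                         \<and> \<not> (\<exists>d. d \<noteq> 0 \<and> list_has_AP 3 d (\<pi> i))"
  defines "a \<equiv> inf_concat (\<lambda>k. if even k then \<sigma> (k div 2 + 1) else \<pi> (k div 2 + 1))"
  shows "bij_betw a UNIV {x::int. x > 0}
         \<and> (\<forall>m n. m < n \<and> odd (a m) \<and> even (a n) \<longrightarrow> 2 * a m - a n < 0)
         \<and> \<not> (\<exists>d. odd d \<and> seq_has_AP 4 d a)"
proof -
  define B where "B = (\<lambda>k. if even k then \<sigma> (k div 2 + 1) else \<pi> (k div 2 + 1))"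
  have aB: "a = inf_concat B" unfolding a_def B_def by simp
  have setB: "set (B k) = Sset k" for k
    using sigma[of "k div 2 + 1"] pi[of "k div 2 + 1"] unfolding B_def Sset_def by simp
  have distB: "distinct (B k)" for k
    using sigma[of "k div 2 + 1"] pi[of "k div 2 + 1"] unfolding B_def by simp
  have pos: "length (B k) > 0" for k
  proof -
    obtain x where "x \<in> Sset k"
    proof (cases "even k")
      case True
      obtain q where q: "(4::int)^(k div 2 + 1) = 12*q+4" using pow4 by (metis Suc_eq_plus1)
      have "(0::int) < 4^(k div 2 + 1)" by simp
      hence q0: "q \<ge> 0" using q by linarith
      have "2*(2*q+1) \<in> Sset k" using True q q0 unfolding Sset_def Eset_def by simp
      thus ?thesis using that by blast
    next
      case False
      obtain q where q: "(4::int)^(k div 2 + 1) = 12*q+4" using pow4 by (metis Suc_eq_plus1)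
      have "(0::int) < 4^(k div 2 + 1)" by simp
      hence q0: "q \<ge> 0" using q by linarith
      have "2*q+1 \<in> Sset k" using False q q0 unfolding Sset_def Oset_def by simp
      thus ?thesis using that by blast
    qed
    hence "set (B k) \<noteq> {}" using setB by auto
    thus ?thesis by simp
  qed
  have ain: "a n \<in> Sset (blk B n)" for n using ic_in[where B=B and n=n, OF pos] setB aB by simp
  have apos: "a n > 0" for n using S_pos[OF ain] .
  have bij: "bij_betw a UNIV {x::int. x > 0}"
    unfolding bij_betw_def
  proof
    show "inj_on a UNIV"
    proof (rule inj_onI)
      fix m n assume "a m = a n"
      have kk: "blk B m = blk B n" using S_disj ain[of m] ain[of n] \<open>a m = a n\<close> by metis
      define k where "k = blk B m"
      have i1: "m - block_start B k < length (B k)" using ic_idx[where B=B and n=m, OF pos] unfolding k_def .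
      have i2: "n - block_start B k < length (B k)" using ic_idx[where B=B and n=n, OF pos] kk unfolding k_def by simp
      have "B k ! (m - block_start B k) = B k ! (n - block_start B k)"
        using \<open>a m = a n\<close> kk unfolding aB ic_eq k_def by simp
      hence "m - block_start B (blk B m) = n - block_start B (blk B m)"
        using nth_eq_iff_index_eq[OF distB i1 i2] unfolding k_def by simp
      thus "m = n" using blk_props[where B=B and n=m, OF pos] blk_props[where B=B and n=n, OF pos] unfolding kk by arith
    qed
  next
    show "range a = {x. 0 < x}"
    proof
      show "range a \<subseteq> {x. 0 < x}" using apos by auto
    next
      show "{x. 0 < x} \<subseteq> range a"
      proof
        fix x :: int assume "x \<in> {x. 0 < x}"
        then obtain k where "x \<in> Sset k" using S_cover by auto
        then obtain j where j: "j < length (B k)" "B k ! j = x" using setB by (metis in_set_conv_nth)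
        have "a (block_start B k + j) = x" using ic_at[where B=B, OF pos j(1)] j aB by simp
        thus "x \<in> range a" by (metis rangeI)
      qed
    qed
  qed
  have ord: "\<forall>m n. m < n \<and> odd (a m) \<and> even (a n) \<longrightarrow> 2 * a m - a n < 0"
  proof (intro allI impI)
    fix m n assume h: "m < n \<and> odd (a m) \<and> even (a n)"
    have "blk B m \<le> blk B n" using blk_mono[where B=B and m=m and n=n, OF pos] h by simp
    thus "2 * a m - a n < 0" using S_order[OF ain[of m] ain[of n]] h by simp
  qed
  have noap: "\<not> (\<exists>d. odd d \<and> seq_has_AP 4 d a)"
  proof
    assume "\<exists>d. odd d \<and> seq_has_AP 4 d a"
    then obtain d p where d: "odd d" and p1: "\<forall>m. Suc m < 4 \<longrightarrow> p m < p (Suc m)"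
      and p2: "\<forall>m. Suc m < 4 \<longrightarrow> a (p (Suc m)) - a (p m) = d"
      unfolding seq_has_AP_def by blast
    have lt: "p 0 < p 1" "p 1 < p 2" "p 2 < p 3" using p1 by (auto simp: numeral_eq_Suc)
    have df: "a (p 1) = a (p 0) + d" "a (p 2) = a (p 1) + d" "a (p 3) = a (p 2) + d"
      using p2[rule_format, of 0] p2[rule_format, of 1] p2[rule_format, of 2]
      by (auto simp: numeral_eq_Suc)
    show False
    proof (cases "odd (a (p 0))")
      case True
      have e1: "even (a (p 1))" using True df(1) d by simp
      have o2: "odd (a (p 2))" using e1 df(2) d by simp
      have e3: "even (a (p 3))" using o2 df(3) d by simp
      have "2 * a (p 0) - a (p 1) < 0" using ord lt(1) True e1 by blast
      moreover have "2 * a (p 2) - a (p 3) < 0" using ord lt(3) o2 e3 by blast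
      ultimately show False using apos[of "p 0"] df by linarith
    next
      case False
      have o1: "odd (a (p 1))" using False df(1) d by simp
      have e2: "even (a (p 2))" using o1 df(2) d by simp
      have "2 * a (p 1) - a (p 2) < 0" using ord lt(2) o1 e2 by blast
      thus False using apos[of "p 0"] df by linarith
    qed
  qed
  show ?thesis using bij ord noap by blast
qed

end
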